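(* Let $p$ be a prime with $p\notin\{2,3,7,43\}$. Then $\{p,2p,6p,42p,1806p\}\subseteq\mathcal{M}_p^{(1)}$.
   Context: For positive integers $k,n$ let $S_k(n)=\sum_{i=1}^{n} i^k$. For an integer $a$, $\mathcal{M}_a$ denotes the set of positive integers $n$ such that $S_n(n)\equiv a\pmod{n}$. For a prime $p$, $\mathcal{M}_p^{(1)}=\{n\in\mathcal{M}_p : p\mid n,\ p^2\nmid n\}$. *)

theory Defs
  imports "HOL-Number_Theory.Number_Theory"
begin

definition S :: "nat \<Rightarrow> nat \<Rightarrow> int" where
  "S k n = (\<Sum>i=1..n. (int i) ^ k)"

definition M :: "int \<Rightarrow> nat set" where
  "M a = {n. n > 0 \<and> [S n n = a] (mod (int n))}"

definition M1 :: "nat \<Rightarrow> nat set" where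
  "M1 p = {n \<in> M (int p). p dvd n \<and> \<not> p^2 dvd n}"

end

theory Submission
  imports Defs
begin

lemma sum_nondiv:
  assumes q: "prime (q::nat)" and nd: "\<not> (q-1) dvd k"
  shows "int q dvd (\<Sum>i=1..q-1. (int i)^k)"
proof -
  have q1: "q > 1" using q prime_gt_1_nat by blast
  obtain g where g: "residue_primroot q g" using prime_primitive_root_exists[of q] q q1 by blast
  hence cop: "coprime q g" and ordg: "ord q g = q - 1" using totient_prime q by (auto simp: residue_primroot_def)
  have ng: "\<not> [g^k = 1] (mod q)" using ord_divides ordg nd by metis
  define f where "f i = (g*i) mod q" for i
  let ?A = "{1..q-1}"
  have injf: "inj_on f ?A"
  proof
    fix i j assume ij: "i\<in>?A" "j\<in>?A" "f i = f j"
    hence "[g*i = g*j] (mod q)" by (simp add: f_def cong_def)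
    hence "[i = j] (mod q)" using cop cong_mult_lcancel_nat coprime_commute by blast
    thus "i = j" using ij(1,2) cong_less_modulus_unique_nat by auto
  qed
  have sub: "f ` ?A \<subseteq> ?A"
  proof
    fix x assume "x \<in> f ` ?A"
    then obtain i where i: "i \<in> ?A" "x = f i" by blast
    have "x < q" using i q1 by (simp add: f_def)
    moreover have "x \<noteq> 0"
    proof
      assume "x = 0"
      hence "q dvd g*i" using i by (simp add: f_def mod_eq_0_iff_dvd)
      hence "q dvd g \<or> q dvd i" using q prime_dvd_mult_iff by blast
      moreover have "\<not> q dvd g" using cop q1
        by (metis coprime_absorb_left nat_dvd_1_iff_1 less_irrefl)
      moreover have "\<not> q dvd i" using i by (auto dest: dvd_imp_le)
      ultimately show False by blast
    qed
    ultimately show "x \<in> ?A" by auto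
  qed
  have "f ` ?A = ?A" by (rule endo_inj_surj[OF _ sub injf]) simp
  hence bij: "bij_betw f ?A ?A" unfolding bij_betw_def using injf by blast
  let ?S = "\<Sum>i\<in>?A. (int i)^k"
  have e1: "(\<Sum>i\<in>?A. (int (f i))^k) = ?S" using sum.reindex_bij_betw[OF bij, of "\<lambda>i. (int i)^k"] by simp
  have e2: "[(\<Sum>i\<in>?A. (int (g*i))^k) = (\<Sum>i\<in>?A. (int (f i))^k)] (mod int q)"
    by (rule cong_sum, rule cong_pow) (simp add: f_def cong_def of_nat_mod)
  have e3: "(\<Sum>i\<in>?A. (int (g*i))^k) = (int g)^k * ?S" by (simp add: power_mult_distrib sum_distrib_left)
  have "[(int g)^k * ?S = ?S] (mod int q)" using e1 e2 e3 by simp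
  hence "int q dvd ((int g)^k - 1) * ?S" by (simp add: cong_iff_dvd_diff left_diff_distrib)
  moreover have "\<not> int q dvd (int g)^k - 1"
  proof
    assume "int q dvd (int g)^k - 1"
    hence "[int (g^k) = int 1] (mod int q)" by (simp add: cong_iff_dvd_diff)
    thus False using ng cong_int_iff by blast
  qed
  moreover have "prime (int q)" using q by simp
  ultimately show ?thesis using prime_dvd_mult_iff by blast
qed

lemma sum_div:
  assumes q: "prime (q::nat)" and d: "(q-1) dvd k"
  shows "[(\<Sum>i=1..q-1. (int i)^k) = int q - 1] (mod int q)"
proof -
  obtain c where c: "k = (q-1)*c" using d by blast
  have "[(\<Sum>i=1..q-1. (int i)^k) = (\<Sum>i=1..q-1. 1)] (mod int q)"
  proof (rule cong_sum)
    fix i assume i: "i \<in> {1..q-1}"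
    hence "\<not> q dvd i" by (auto dest: dvd_imp_le)
    hence "[i^(q-1) = 1] (mod q)" using fermat_theorem q by blast
    hence "[(i^(q-1))^c = 1^c] (mod q)" by (rule cong_pow)
    hence "[i^k = 1] (mod q)" by (simp add: c power_mult)
    hence "[int (i^k) = int 1] (mod int q)" using cong_int_iff by blast
    thus "[(int i)^k = 1] (mod int q)" by simp
  qed
  moreover have "(\<Sum>i=1..q-1. (1::int)) = int q - 1" using q prime_gt_1_nat[of q] by simp
  ultimately show ?thesis by simp
qed

lemma sum_block:
  assumes "(q::nat) > 0"
  shows "[(\<Sum>i=1..t*q. (int i)^k) = int t * (\<Sum>i=1..q. (int i)^k)] (mod int q)"
proof (induction t)
  case 0 then show ?case by simp
next
  case (Suc t)
  have "(\<Sum>i=1..Suc t*q. (int i)^k) = (\<Sum>i=1..t*q. (int i)^k) + (\<Sum>i=t*q+1..t*q+q. (int i)^k)"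
    using sum.ub_add_nat[of 1 "t*q" "\<lambda>i. (int i)^k" q] by (simp add: add.commute)
  also have "(\<Sum>i=t*q+1..t*q+q. (int i)^k) = (\<Sum>i=1..q. (int (i + t*q))^k)"
    using sum.shift_bounds_cl_nat_ivl[of "\<lambda>i. (int i)^k" 1 "t*q" q] by (simp add: add.commute)
  finally have eq: "(\<Sum>i=1..Suc t*q. (int i)^k) = (\<Sum>i=1..t*q. (int i)^k) + (\<Sum>i=1..q. (int (i + t*q))^k)" .
  have "[(\<Sum>i=1..q. (int (i + t*q))^k) = (\<Sum>i=1..q. (int i)^k)] (mod int q)"
    by (rule cong_sum, rule cong_pow) (simp add: cong_def)
  with Suc.IH have "[(\<Sum>i=1..t*q. (int i)^k) + (\<Sum>i=1..q. (int (i + t*q))^k)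
      = int t * (\<Sum>i=1..q. (int i)^k) + (\<Sum>i=1..q. (int i)^k)] (mod int q)"
    by (rule cong_add)
  thus ?case using eq by (simp add: algebra_simps)
qed

lemma sum_full:
  assumes q: "prime (q::nat)" and k: "k > 0"
  shows "[(\<Sum>i=1..q. (int i)^k) = (\<Sum>i=1..q-1. (int i)^k)] (mod int q)"
proof -
  have "q = Suc (q-1)" using q prime_gt_1_nat[of q] by simp
  hence "(\<Sum>i=1..q. (int i)^k) = (\<Sum>i=1..q-1. (int i)^k) + (int q)^k"
    using sum.cl_ivl_Suc[of "\<lambda>i. (int i)^k" 1 "q-1"] by simp
  moreover have "int q dvd (int q)^k" using k by simp
  ultimately show ?thesis by (simp add: cong_iff_dvd_diff)
qed


lemma S_block:
  assumes q: "prime (q::nat)" and k: "k > 0"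
  shows "[(\<Sum>i=1..t*q. (int i)^k) = int t * (\<Sum>i=1..q-1. (int i)^k)] (mod int q)"
proof -
  have "q > 0" using q prime_gt_0_nat by blast
  from sum_block[OF this, where t=t and k=k] have "[(\<Sum>i=1..t*q. (int i)^k) = int t * (\<Sum>i=1..q. (int i)^k)] (mod int q)" .
  moreover have "[int t * (\<Sum>i=1..q. (int i)^k) = int t * (\<Sum>i=1..q-1. (int i)^k)] (mod int q)"
    by (rule cong_mult[OF cong_refl sum_full[OF q k]])
  ultimately show ?thesis by (rule cong_trans)
qed

lemma at_q:
  assumes q: "prime (q::nat)" and dm: "(q-1) dvd m" and mc: "m = c*q" and dc: "q dvd (c+1)" and p: "prime (p::nat)"
  shows "int q dvd (S (m*p) (m*p) - int p)"
proof -
  let ?n = "m*p" and ?t = "c*p"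
  have n: "?n = ?t * q" using mc by simp
  have pp: "p > 0" using p prime_gt_0_nat by blast
  have c0: "c > 0"
  proof (rule ccontr)
    assume "\<not> c > 0" hence "c = 0" by simp
    with dc have "q dvd 1" by simp
    with q show False by simp
  qed
  have q0: "q > 0" using prime_gt_0_nat[OF q] .
  have kpos: "?n > 0" unfolding mc using pp c0 q0 by simp
  have dk: "(q-1) dvd ?n" using dm by (rule dvd_mult2)
  have "[S ?n ?n = int ?t * (\<Sum>i=1..q-1. (int i)^?n)] (mod int q)"
  proof -
    have "S ?n ?n = (\<Sum>i=1..?t*q. (int i)^?n)" unfolding S_def by (subst n, rule refl)
    thus ?thesis using S_block[OF q kpos, of ?t] by simp
  qed
  moreover have "[int ?t * (\<Sum>i=1..q-1. (int i)^?n) = int ?t * (int q - 1)] (mod int q)"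
    by (rule cong_mult[OF cong_refl sum_div[OF q dk]])
  ultimately have "[S ?n ?n = int ?t * (int q - 1)] (mod int q)" by (rule cong_trans)
  hence h1: "int q dvd S ?n ?n - int ?t * (int q - 1)" by (simp add: cong_iff_dvd_diff)
  have "int q dvd int (c+1)" using dc by (simp only: int_dvd_int_iff)
  then have h2: "int q dvd int (c+1) * int p" by (rule dvd_mult2)
  have eqn: "S ?n ?n - int p = (S ?n ?n - int ?t * (int q - 1)) + int ?t * int q - int (c+1) * int p"
    by (simp add: algebra_simps)
  have h3: "int q dvd int ?t * int q" by simp
  have "int q dvd (S ?n ?n - int ?t * (int q - 1)) + int ?t * int q - int (c+1) * int p"
    by (rule dvd_diff[OF dvd_add[OF h1 h3] h2])
  then show ?thesis by (subst eqn)
qed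

lemma at_p:
  assumes p: "prime (p::nat)" and m: "m > 0" and nd: "\<not> (p-1) dvd (m*p)"
  shows "int p dvd (S (m*p) (m*p) - int p)"
proof -
  let ?n = "m*p"
  have kpos: "?n > 0" using m p prime_gt_0_nat by auto
  have "[S ?n ?n = int m * (\<Sum>i=1..p-1. (int i)^?n)] (mod int p)"
    unfolding S_def using S_block[OF p kpos, of m] by simp
  moreover have "int p dvd int m * (\<Sum>i=1..p-1. (int i)^?n)" using sum_nondiv[OF p nd] by simp
  ultimately have "int p dvd S ?n ?n" by (simp add: cong_dvd_iff)
  thus ?thesis by simp
qed


lemma np: "(p::nat) = a*b \<Longrightarrow> a\<noteq>1 \<Longrightarrow> b\<noteq>1 \<Longrightarrow> \<not>prime p" by (metis prime_product)

lemma pm1: assumes "prime (p::nat)" "p \<notin> {2,3,7,43}" "(p-1) \<in> {1,2,3,6,7,14,21,42,43,86,129,258,301,602,903,1806}" shows False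
proof -
  have "p \<ge> 2" using assms(1) prime_ge_2_nat by blast
  hence "p = (p-1)+1" by simp
  hence "p \<in> (\<lambda>k. k+1) ` {1,2,3,6,7,14,21,42,43,86,129,258,301,602,903,1806}" using assms(3) by (metis image_eqI)
  hence "p \<in> {4,8,15,22,44,87,130,259,302,603,904,1807}" using assms(2) by simp
  hence "p = 2*2 \<or> p = 2*4 \<or> p = 3*5 \<or> p = 2*11 \<or> p = 4*11 \<or> p = 3*29 \<or> p = 2*65 \<or> p = 7*37
     \<or> p = 2*151 \<or> p = 3*201 \<or> p = 2*452 \<or> p = 13*139" by simp
  then show False using assms(1) np by (smt (verit) numeral_eq_one_iff semiring_norm(85) semiring_norm(86))
qed

lemma dvd_prime_mult: assumes "prime (q::nat)" "d dvd q*r" shows "d dvd r \<or> (\<exists>e. d = q*e \<and> e dvd r)"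
proof (cases "q dvd d")
  case True then obtain e where "d = q*e" by blast
  with assms show ?thesis using prime_gt_0_nat by auto
next
  case False then have "coprime d q" using assms(1)
    by (metis coprime_commute prime_imp_coprime)
  with assms show ?thesis using coprime_dvd_mult_right_iff by blast
qed

lemma div1806: assumes "(d::nat) dvd 1806" shows "d \<in> {1,2,3,6,7,14,21,42,43,86,129,258,301,602,903,1806}"
proof -
  have a: "d dvd 2*(3*(7*43))" using assms by simp
  have d43: "\<And>d. d dvd (43::nat) \<Longrightarrow> d = 1 \<or> d = 43"
    using prime_nat_iff[of "43::nat"] by simp
  have pr: "prime (2::nat)" "prime (3::nat)" "prime (7::nat)" by simp_all
  from dvd_prime_mult[OF pr(1) a] obtain d1 where "d = d1 \<or> d = 2*d1" and b: "d1 dvd 3*(7*43)" by auto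
  from dvd_prime_mult[OF pr(2) b] obtain d2 where "d1 = d2 \<or> d1 = 3*d2" and c: "d2 dvd 7*43" by auto
  from dvd_prime_mult[OF pr(3) c] obtain d3 where "d2 = d3 \<or> d2 = 7*d3" and e: "d3 dvd 43" by auto
  from d43[OF e] have "d3 = 1 \<or> d3 = 43" .
  then show ?thesis using \<open>d = d1 \<or> d = 2*d1\<close> \<open>d1 = d2 \<or> d1 = 3*d2\<close> \<open>d2 = d3 \<or> d2 = 7*d3\<close> by auto
qed

lemma key:
  assumes p: "prime (p::nat)" and pn: "p \<notin> {2,3,7,43}" and m: "m dvd 1806" and m0: "m > 0"
    and dm: "int m dvd (S (m*p) (m*p) - int p)"
  shows "m*p \<in> M1 p"
proof -
  have pnd: "\<not> p dvd m"
  proof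
    assume "p dvd m"
    hence "p dvd 1806" using m dvd_trans by blast
    hence "p dvd 2*(3*(7*43))" by simp
    hence "p dvd 2 \<or> p dvd 3 \<or> p dvd 7 \<or> p dvd 43" by (simp only: prime_dvd_mult_iff[OF p])
    moreover have "prime (2::nat)" "prime (3::nat)" "prime (7::nat)" "prime (43::nat)" by simp_all
    ultimately have "p = 2 \<or> p = 3 \<or> p = 7 \<or> p = 43" using primes_dvd_imp_eq[OF p] by metis
    hence "p \<in> {2,3,7,43}" by simp
    thus False using pn by blast
  qed
  have nd: "\<not> (p-1) dvd (m*p)"
  proof
    assume a: "(p-1) dvd m*p"
    have "coprime (p-1) p" using p prime_gt_0_nat coprime_diff_one_left_nat by blast
    hence "(p-1) dvd m" using a coprime_dvd_mult_left_iff by blast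
    hence "(p-1) dvd 1806" using m dvd_trans by blast
    thus False using pm1[OF p pn div1806] by blast
  qed
  have hp: "int p dvd S (m*p) (m*p) - int p" using at_p[OF p m0 nd] .
  have cop: "coprime (int m) (int p)" using prime_imp_coprime[OF p pnd] by (simp add: coprime_commute)
  have "int m * int p dvd S (m*p) (m*p) - int p" by (rule divides_mult[OF dm hp cop])
  hence c: "[S (m*p) (m*p) = int p] (mod int (m*p))" by (simp only: cong_iff_dvd_diff of_nat_mult)
  have "\<not> p^2 dvd m*p"
  proof
    assume "p^2 dvd m*p"
    hence "p*p dvd p*m" by (simp only: power2_eq_square mult.commute)
    hence "p = 0 \<or> p dvd m" by (simp only: nat_mult_dvd_cancel_disj)
    hence "p dvd m" using p prime_gt_0_nat by blast
    thus False using pnd by blast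
  qed
  moreover have "m*p > 0" using m0 p prime_gt_0_nat by simp
  ultimately show ?thesis using c by (simp add: M1_def M_def)
qed

theorem mainTheorem17:
  fixes p :: nat
  assumes "prime p" and "p \<notin> {2, 3, 7, 43}"
  shows "{p, 2*p, 6*p, 42*p, 1806*p} \<subseteq> M1 p"
proof -
  note p = assms(1) and pn = assms(2)
  have r1: "1*p \<in> M1 p" by (rule key[OF p pn]) simp_all
  have a2: "int 2 dvd S (2*p) (2*p) - int p" by (rule at_q[where c=1]) (simp_all add: p)
  have r2: "2*p \<in> M1 p" by (rule key[OF p pn]) (use a2 in simp_all)
  have b2: "int 2 dvd S (6*p) (6*p) - int p" by (rule at_q[where c=3]) (simp_all add: p)
  have b3: "int 3 dvd S (6*p) (6*p) - int p" by (rule at_q[where c=2]) (simp_all add: p)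
  have "int 2 * int 3 dvd S (6*p) (6*p) - int p" by (rule divides_mult[OF b2 b3]) simp
  hence r6: "6*p \<in> M1 p" by - (rule key[OF p pn], simp_all)
  have c2: "int 2 dvd S (42*p) (42*p) - int p" by (rule at_q[where c=21]) (simp_all add: p)
  have c3: "int 3 dvd S (42*p) (42*p) - int p" by (rule at_q[where c=14]) (simp_all add: p)
  have c7: "int 7 dvd S (42*p) (42*p) - int p" by (rule at_q[where c=6]) (simp_all add: p)
  have "int 2 * int 3 dvd S (42*p) (42*p) - int p" by (rule divides_mult[OF c2 c3]) simp
  hence "int 2 * int 3 * int 7 dvd S (42*p) (42*p) - int p" by (rule divides_mult[OF _ c7]) (use coprime_add_one_right[of "6::int"] in simp)
  hence r42: "42*p \<in> M1 p" by - (rule key[OF p pn], simp_all)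
  have d2: "int 2 dvd S (1806*p) (1806*p) - int p" by (rule at_q[where c=903]) (simp_all add: p)
  have d3: "int 3 dvd S (1806*p) (1806*p) - int p" by (rule at_q[where c=602]) (simp_all add: p)
  have d7: "int 7 dvd S (1806*p) (1806*p) - int p" by (rule at_q[where c=258]) (simp_all add: p)
  have d43: "int 43 dvd S (1806*p) (1806*p) - int p" by (rule at_q[where c=42]) (simp_all add: p)
  have "int 2 * int 3 dvd S (1806*p) (1806*p) - int p" by (rule divides_mult[OF d2 d3]) simp
  hence "int 2 * int 3 * int 7 dvd S (1806*p) (1806*p) - int p" by (rule divides_mult[OF _ d7]) (use coprime_add_one_right[of "6::int"] in simp)
  hence "int 2 * int 3 * int 7 * int 43 dvd S (1806*p) (1806*p) - int p" by (rule divides_mult[OF _ d43]) (use coprime_add_one_right[of "42::int"] in simp)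
  hence r1806: "1806*p \<in> M1 p" by - (rule key[OF p pn], simp_all)
  show ?thesis using r1 r2 r6 r42 r1806 by simp
qed

end
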